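(* Let $n\ge 1$, let $x_0<x_1<\dots<x_n$ be real numbers and let $\hat x_0<\hat x_1<\dots<\hat x_n$ be real numbers with $\hat x_0=x_0$ and $\hat x_n=x_n$. Fix $k\in\{0,\dots,n\}$. If $\xi:=\sum_{j\neq k}|r_{jk}(\mathbf{x},\hat{\mathbf{x}})|<1$, then \[ -\frac{\xi^2}{(1-\xi)^3}\Bigl(1+\tfrac14\xi^2\Bigr)\ \le\ z_k(\mathbf{x},\hat{\mathbf{x}})-\sum_{j\neq k} r_{jk}(\mathbf{x},\hat{\mathbf{x}})\ \le\ \frac{\xi^2}{1-\xi}. \]
   Context: For distinct nodes $\mathbf{x}=(x_0,\dots,x_n)$ the barycentric weights are $\lambda_k(\mathbf{x}):=1/\prod_{j\neq k}(x_k-x_j)$. For two node vectors $\mathbf{x},\hat{\mathbf{x}}$ define the relative weight errors $z_k(\mathbf{x},\hat{\mathbf{x}}):=\dfrac{\lambda_k(\mathbf{x})-\lambda_k(\hat{\mathbf{x}})}{\lambda_k(\hat{\mathbf{x}})}$ and the relative errors in node differences $r_{jk}(\mathbf{x},\hat{\mathbf{x}}):=\dfrac{\hat x_k-\hat x_j}{x_k-x_j}-1$ for $j\neq k$. *)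

theory Defs
  imports Complex_Main
begin

text \<open>Nodes x_0,...,x_n are represented as functions nat => real, only indices 0..n matter.\<close>

definition bary_weight :: "nat \<Rightarrow> (nat \<Rightarrow> real) \<Rightarrow> nat \<Rightarrow> real" where
  "bary_weight n x k = 1 / (\<Prod>j\<in>{0..n} - {k}. (x k - x j))"

definition rel_weight_err :: "nat \<Rightarrow> (nat \<Rightarrow> real) \<Rightarrow> (nat \<Rightarrow> real) \<Rightarrow> nat \<Rightarrow> real" where
  "rel_weight_err n x xh k = (bary_weight n x k - bary_weight n xh k) / bary_weight n xh k"

definition rel_diff_err :: "(nat \<Rightarrow> real) \<Rightarrow> (nat \<Rightarrow> real) \<Rightarrow> nat \<Rightarrow> nat \<Rightarrow> real" where
  "rel_diff_err x xh j k = (xh k - xh j) / (x k - x j) - 1"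

end

theory Submission
  imports Defs
begin

lemma mono_aux:
  fixes x :: "nat \<Rightarrow> real"
  assumes "\<And>i. i < n \<Longrightarrow> x i < x (Suc i)" 
  shows "i < j \<Longrightarrow> j \<le> n \<Longrightarrow> x i < x j"
proof (induction j)
  case 0 then show ?case by simp
next
  case (Suc j)
  then show ?case using assms[of j]
    by (cases "i = j") (auto simp: less_Suc_eq)
qed

lemma neq_aux:
  fixes x :: "nat \<Rightarrow> real"
  assumes "\<And>i. i < n \<Longrightarrow> x i < x (Suc i)" "i \<le> n" "j \<le> n" "i \<noteq> j"
  shows "x i \<noteq> x j"
  using mono_aux[of n x, OF assms(1)] assms(2-4)
  by (metis linorder_neqE_nat order_less_irrefl)

lemma err_bound:
  fixes r :: "'a \<Rightarrow> real"
  assumes "finite A"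
  shows "\<bar>(\<Prod>j\<in>A. 1 + r j) - 1 - (\<Sum>j\<in>A. r j)\<bar>
        \<le> (\<Prod>j\<in>A. 1 + \<bar>r j\<bar>) - 1 - (\<Sum>j\<in>A. \<bar>r j\<bar>)"
  using assms
proof (induction A rule: finite_induct)
  case empty then show ?case by simp
next
  case (insert a A)
  define P where "P = (\<Prod>j\<in>A. 1 + r j)"
  define S where "S = (\<Sum>j\<in>A. r j)"
  define Q where "Q = (\<Prod>j\<in>A. 1 + \<bar>r j\<bar>)"
  define T where "T = (\<Sum>j\<in>A. \<bar>r j\<bar>)"
  have IH: "\<bar>P - 1 - S\<bar> \<le> Q - 1 - T" using insert P_def S_def Q_def T_def by simp
  have e1: "(1 + r a) * P - 1 - (r a + S) = (1 + r a) * (P - 1 - S) + r a * S"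
    by (simp add: algebra_simps)
  have e2: "(1 + \<bar>r a\<bar>) * Q - 1 - (\<bar>r a\<bar> + T) = (1 + \<bar>r a\<bar>) * (Q - 1 - T) + \<bar>r a\<bar> * T"
    by (simp add: algebra_simps)
  have "\<bar>S\<bar> \<le> T" unfolding S_def T_def by (rule sum_abs)
  have "\<bar>(1 + r a) * (P - 1 - S) + r a * S\<bar> \<le> \<bar>1 + r a\<bar> * \<bar>P - 1 - S\<bar> + \<bar>r a\<bar> * \<bar>S\<bar>"
    by (metis abs_mult abs_triangle_ineq)
  also have "\<dots> \<le> (1 + \<bar>r a\<bar>) * (Q - 1 - T) + \<bar>r a\<bar> * T"
  proof (rule add_mono)
    show "\<bar>1 + r a\<bar> * \<bar>P - 1 - S\<bar> \<le> (1 + \<bar>r a\<bar>) * (Q - 1 - T)"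
      by (rule mult_mono) (use IH in auto)
    show "\<bar>r a\<bar> * \<bar>S\<bar> \<le> \<bar>r a\<bar> * T"
      using \<open>\<bar>S\<bar> \<le> T\<close> by (simp add: mult_left_mono)
  qed
  finally show ?case using insert e1 e2 P_def S_def Q_def T_def by simp
qed

lemma prod_bound:
  fixes a :: "'a \<Rightarrow> real"
  assumes "finite A" "\<And>j. j \<in> A \<Longrightarrow> a j \<ge> 0" "(\<Sum>j\<in>A. a j) < 1"
  shows "(\<Prod>j\<in>A. 1 + a j) \<le> 1 / (1 - (\<Sum>j\<in>A. a j))"
  using assms
proof (induction A rule: finite_induct)
  case empty then show ?case by simp
next
  case (insert b A)
  define S where "S = (\<Sum>j\<in>A. a j)"
  have ab: "a b \<ge> 0" using insert by simp
  have S0: "S \<ge> 0" unfolding S_def using insert by (simp add: sum_nonneg)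
  have Sb: "S + a b < 1" using insert S_def by simp
  have IH: "(\<Prod>j\<in>A. 1 + a j) \<le> 1 / (1 - S)" using insert.IH insert.prems(1) S_def ab Sb by simp
  have "(\<Prod>j\<in>insert b A. 1 + a j) = (1 + a b) * (\<Prod>j\<in>A. 1 + a j)" using insert by simp
  also have "\<dots> \<le> (1 + a b) * (1 / (1 - S))" using mult_left_mono[OF IH, of "1 + a b"] ab by simp
  also have "\<dots> \<le> 1 / (1 - (S + a b))"
  proof -
    have m: "a b * S \<ge> 0" "a b * a b \<ge> 0" using ab S0 by auto
    have k: "(1 + a b) * (1 - (S + a b)) \<le> 1 - S"
      using m by (simp add: algebra_simps)
    have p1: "1 - S > 0" "1 - (S + a b) > 0" using Sb ab by auto
    have "(1 + a b) * (1 / (1 - S)) = (1 + a b) / (1 - S)" by simp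
    also have "\<dots> \<le> 1 / (1 - (S + a b))"
      using k p1 by (simp add: divide_le_eq le_divide_eq mult.commute)
    finally show ?thesis .
  qed
  finally show ?case using insert S_def by (simp add: add.commute)
qed

theorem lemma1:
  fixes n k :: nat and x xh :: "nat \<Rightarrow> real"
  assumes "n \<ge> 1"
    and "\<And>i. i < n \<Longrightarrow> x i < x (Suc i)"
    and "\<And>i. i < n \<Longrightarrow> xh i < xh (Suc i)"
    and "xh 0 = x 0" and "xh n = x n"
    and "k \<le> n"
    and "(\<Sum>j\<in>{0..n} - {k}. \<bar>rel_diff_err x xh j k\<bar>) < 1"
  shows "- ((\<Sum>j\<in>{0..n} - {k}. \<bar>rel_diff_err x xh j k\<bar>)\<^sup>2
            / (1 - (\<Sum>j\<in>{0..n} - {k}. \<bar>rel_diff_err x xh j k\<bar>)) ^ 3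
            * (1 + (\<Sum>j\<in>{0..n} - {k}. \<bar>rel_diff_err x xh j k\<bar>)\<^sup>2 / 4))
         \<le> rel_weight_err n x xh k - (\<Sum>j\<in>{0..n} - {k}. rel_diff_err x xh j k)
       \<and> rel_weight_err n x xh k - (\<Sum>j\<in>{0..n} - {k}. rel_diff_err x xh j k)
         \<le> (\<Sum>j\<in>{0..n} - {k}. \<bar>rel_diff_err x xh j k\<bar>)\<^sup>2
            / (1 - (\<Sum>j\<in>{0..n} - {k}. \<bar>rel_diff_err x xh j k\<bar>))"
proof -
  define A where "A = {0..n} - {k}"
  define r where "r j = rel_diff_err x xh j k" for j
  define T where "T = (\<Sum>j\<in>A. \<bar>r j\<bar>)"
  have fin: "finite A" unfolding A_def by simp
  have T1: "T < 1" using assms(7) unfolding T_def A_def r_def by simp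
  have T0: "T \<ge> 0" unfolding T_def by (simp add: sum_nonneg)
  have nz: "x k - x j \<noteq> 0" "xh k - xh j \<noteq> 0" if "j \<in> A" for j
    using that neq_aux[of n x k j, OF assms(2) assms(6)] neq_aux[of n xh k j, OF assms(3) assms(6)]
    unfolding A_def by auto
  have P: "(\<Prod>j\<in>A. x k - x j) \<noteq> 0" "(\<Prod>j\<in>A. xh k - xh j) \<noteq> 0"
    using nz fin by auto
  have rw: "rel_weight_err n x xh k = (\<Prod>j\<in>A. 1 + r j) - 1"
  proof -
    have "(\<Prod>j\<in>A. 1 + r j) = (\<Prod>j\<in>A. (xh k - xh j) / (x k - x j))"
      unfolding r_def rel_diff_err_def by simp
    also have "\<dots> = (\<Prod>j\<in>A. xh k - xh j) / (\<Prod>j\<in>A. x k - x j)"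
      by (rule prod_dividef)
    finally show ?thesis
      unfolding rel_weight_err_def bary_weight_def A_def[symmetric]
      using P by (simp add: field_simps)
  qed
  have E: "\<bar>rel_weight_err n x xh k - (\<Sum>j\<in>A. r j)\<bar> \<le> T\<^sup>2 / (1 - T)"
  proof -
    have "\<bar>rel_weight_err n x xh k - (\<Sum>j\<in>A. r j)\<bar> \<le> (\<Prod>j\<in>A. 1 + \<bar>r j\<bar>) - 1 - T"
      using err_bound[OF fin, of r] rw T_def by simp
    also have "\<dots> \<le> 1 / (1 - T) - 1 - T"
      using prod_bound[OF fin, of "\<lambda>j. \<bar>r j\<bar>"] T1 T_def by simp
    also have "\<dots> = T\<^sup>2 / (1 - T)" using T1 by (simp add: field_simps power2_eq_square)
    finally show ?thesis .
  qed
  have "T\<^sup>2 / (1 - T) \<le> T\<^sup>2 / (1 - T) ^ 3 * (1 + T\<^sup>2 / 4)"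
  proof -
    have c: "(1 - T) ^ 3 \<le> 1 - T" using T0 T1
      using power_decreasing[of 1 3 "1 - T"] by simp
    have "T\<^sup>2 / (1 - T) \<le> T\<^sup>2 / (1 - T) ^ 3"
      using T0 T1 c by (intro divide_left_mono) auto
    also have "\<dots> \<le> T\<^sup>2 / (1 - T) ^ 3 * (1 + T\<^sup>2 / 4)"
    proof -
      have y0: "0 \<le> T\<^sup>2 / (1 - T) ^ 3" using T1 by simp
      have "0 \<le> T\<^sup>2 / (1 - T) ^ 3 * (T\<^sup>2 / 4)" using y0 by (intro mult_nonneg_nonneg) auto
      then show ?thesis by (simp add: distrib_left)
    qed
    finally show ?thesis .
  qed
  moreover have "- (T\<^sup>2 / (1 - T)) \<le> rel_weight_err n x xh k - (\<Sum>j\<in>A. r j)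
     \<and> rel_weight_err n x xh k - (\<Sum>j\<in>A. r j) \<le> T\<^sup>2 / (1 - T)"
    using abs_le_D1[OF E] abs_le_D2[OF E] by (intro conjI) linarith+
  ultimately have "- (T\<^sup>2 / (1 - T) ^ 3 * (1 + T\<^sup>2 / 4)) \<le> rel_weight_err n x xh k - (\<Sum>j\<in>A. r j)
     \<and> rel_weight_err n x xh k - (\<Sum>j\<in>A. r j) \<le> T\<^sup>2 / (1 - T)"
    by linarith
  then show ?thesis unfolding T_def A_def r_def .
qed

end
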